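(* Let $s\in\mathbb{N}$, $\bm{n}=(n_1,\dots,n_d)\in\mathbb{Z}^d$ with $\|\bm{n}\|_1\le s$, and $c_{\bm n}\in\mathbb{C}$ such that $|c_{\bm n}e^{i\bm n\cdot\bm x}|\le 1$ for all $\bm{x}\in\mathbb{R}^d$, where $e^{i\bm n\cdot\bm x}=e^{in_1x_1}\cdots e^{in_dx_d}$. Then there exists a PQC $U^{\bm n}(\bm{x})$ such that $$\langle 0|^{\otimes d}U^{\bm n}(\bm x)|0\rangle^{\otimes d}=c_{\bm n}e^{i\bm n\cdot\bm x}$$ for all $\bm x\in\mathbb{R}^d$. The width of the PQC is at most $d$, the depth is at most $6s+3$, and the number of parameters is at most $4s+3d$.
   Context: Here a PQC with input $\bm x\in\mathbb{R}^d$ is a quantum circuit built from single-qubit gates (and CNOTs), the single-qubit gates being Pauli rotations $R_Y(\theta)=\begin{pmatrix}\cos\frac\theta2&-\sin\frac\theta2\\ \sin\frac\theta2&\cos\frac\theta2\end{pmatrix}$, $R_Z(\theta)=\mathrm{diag}(e^{-i\theta/2},e^{i\theta/2})$ with trainable real angles not depending on $\bm x$, or data-encoding gates $R_Z(x_j)$ applied with a coordinate $x_j\in\mathbb{R}$ of the input (Pauli-$Z$ basis encoding). Width = number of qubits, depth = circuit depth, number of parameters = number of trainable angles. *)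

theory Defs
  imports Complex_Main
begin

text \<open>Computational basis states of a w-qubit register are indexed by naturals b < 2^w;
  qubit q of basis index b is the q-th binary digit of b (False = |0>, True = |1>).\<close>

definition qbit :: "nat \<Rightarrow> nat \<Rightarrow> bool" where
  "qbit b q = odd (b div 2 ^ q)"

definition set_qbit :: "nat \<Rightarrow> nat \<Rightarrow> bool \<Rightarrow> nat" where
  "set_qbit b q a = (if qbit b q = a then b else if a then b + 2 ^ q else b - 2 ^ q)"

type_synonym mat2 = "bool \<Rightarrow> bool \<Rightarrow> complex"

definition RYmat :: "real \<Rightarrow> mat2" where
  "RYmat \<theta> = (\<lambda>r c. if \<not> r \<and> \<not> c then complex_of_real (cos (\<theta>/2))
                  else if \<not> r \<and> c then - complex_of_real (sin (\<theta>/2))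
                  else if r \<and> \<not> c then complex_of_real (sin (\<theta>/2))
                  else complex_of_real (cos (\<theta>/2)))"

definition RZmat :: "real \<Rightarrow> mat2" where
  "RZmat \<theta> = (\<lambda>r c. if r \<noteq> c then 0
                  else if \<not> r then exp (- \<i> * complex_of_real (\<theta>/2))
                  else exp (\<i> * complex_of_real (\<theta>/2)))"

definition apply1 :: "mat2 \<Rightarrow> nat \<Rightarrow> (nat \<Rightarrow> complex) \<Rightarrow> (nat \<Rightarrow> complex)" where
  "apply1 M q \<psi> = (\<lambda>b. M (qbit b q) False * \<psi> (set_qbit b q False)
                       + M (qbit b q) True * \<psi> (set_qbit b q True))"

definition apply_cnot :: "nat \<Rightarrow> nat \<Rightarrow> (nat \<Rightarrow> complex) \<Rightarrow> (nat \<Rightarrow> complex)" where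
  "apply_cnot c t \<psi> = (\<lambda>b. if qbit b c then \<psi> (set_qbit b t (\<not> qbit b t)) else \<psi> b)"

text \<open>Gates: trainable R_Y(theta) / R_Z(theta) on a qubit (angle independent of x),
  data-encoding gate R_Z(x_j) on a qubit (DataRZ q j), and CNOT (control, target).\<close>
datatype gate = RY nat real | RZ nat real | DataRZ nat nat | CNOT nat nat

fun gate_qubits :: "gate \<Rightarrow> nat list" where
  "gate_qubits (RY q _) = [q]"
| "gate_qubits (RZ q _) = [q]"
| "gate_qubits (DataRZ q _) = [q]"
| "gate_qubits (CNOT c t) = [c, t]"

fun gate_params :: "gate \<Rightarrow> nat" where
  "gate_params (RY _ _) = 1"
| "gate_params (RZ _ _) = 1"
| "gate_params (DataRZ _ _) = 0"
| "gate_params (CNOT _ _) = 0"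

fun gate_data_ok :: "nat \<Rightarrow> gate \<Rightarrow> bool" where
  "gate_data_ok d (DataRZ _ j) = (j < d)"
| "gate_data_ok d _ = True"

fun apply_gate :: "(nat \<Rightarrow> real) \<Rightarrow> gate \<Rightarrow> (nat \<Rightarrow> complex) \<Rightarrow> (nat \<Rightarrow> complex)" where
  "apply_gate x (RY q \<theta>) \<psi> = apply1 (RYmat \<theta>) q \<psi>"
| "apply_gate x (RZ q \<theta>) \<psi> = apply1 (RZmat \<theta>) q \<psi>"
| "apply_gate x (DataRZ q j) \<psi> = apply1 (RZmat (x j)) q \<psi>"
| "apply_gate x (CNOT c t) \<psi> = apply_cnot c t \<psi>"

text \<open>A circuit is given by its number of qubits (width) and a list of layers; each
  layer is a list of gates acting on pairwise disjoint qubits, so the circuit depth is at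
  most the number of layers.  Layers are applied first to last.\<close>
datatype circuit = Circuit nat "gate list list"

fun width :: "circuit \<Rightarrow> nat" where "width (Circuit w L) = w"
fun depth :: "circuit \<Rightarrow> nat" where "depth (Circuit w L) = length L"
fun gates :: "circuit \<Rightarrow> gate list" where "gates (Circuit w L) = concat L"

definition num_params :: "circuit \<Rightarrow> nat" where
  "num_params C = sum_list (map gate_params (gates C))"

fun wf_circuit :: "nat \<Rightarrow> circuit \<Rightarrow> bool" where
  "wf_circuit d (Circuit w L) =
     (\<forall>layer \<in> set L. distinct (concat (map gate_qubits layer))
        \<and> (\<forall>g \<in> set layer. (\<forall>q \<in> set (gate_qubits g). q < w) \<and> gate_data_ok d g))"

definition basis0 :: "nat \<Rightarrow> complex" where
  "basis0 = (\<lambda>b. if b = 0 then 1 else 0)"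

definition run :: "circuit \<Rightarrow> (nat \<Rightarrow> real) \<Rightarrow> (nat \<Rightarrow> complex)" where
  "run C x = fold (apply_gate x) (gates C) basis0"

text \<open>The amplitude <0|^{(x) w} U(x) |0>^{(x) w}, w = width C.\<close>
definition amp00 :: "circuit \<Rightarrow> (nat \<Rightarrow> real) \<Rightarrow> complex" where
  "amp00 C x = run C x 0"

end

theory Submission imports Defs begin

definition st :: "complex \<Rightarrow> complex \<Rightarrow> nat \<Rightarrow> complex" where
  "st a b = (\<lambda>k. if k = 0 then a else if k = 1 then b else 0)"

lemma qbit0: "qbit k 0 = odd k" by (simp add: qbit_def)

lemma apply1_st: "apply1 M 0 (st a b) = st (M False False * a + M False True * b) (M True False * a + M True True * b)"
proof
  fix k :: nat
  show "apply1 M 0 (st a b) k = st (M False False * a + M False True * b) (M True False * a + M True True * b) k"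
  proof (cases "k \<le> 1")
    case True
    then have "k = 0 \<or> k = 1" by auto
    then show ?thesis by (auto simp: apply1_def st_def set_qbit_def qbit0)
  next
    case False
    then have "odd k \<Longrightarrow> k - 1 \<noteq> 0 \<and> k - 1 \<noteq> 1" by presburger
    with False show ?thesis by (auto simp: apply1_def st_def set_qbit_def qbit0)
  qed
qed

lemma basis0_st: "basis0 = st 1 0" by (auto simp: basis0_def st_def)

lemma data_fold: "fold (apply_gate x) (map (DataRZ 0) js) (st a b)
  = st (a * exp (- \<i> * complex_of_real (sum_list (map x js) / 2))) (b * exp (\<i> * complex_of_real (sum_list (map x js) / 2)))"
proof (induction js arbitrary: a b)
  case Nil
  then show ?case by simp
next
  case (Cons j js)
  have "apply_gate x (DataRZ 0 j) (st a b) = st (a * exp (- \<i> * complex_of_real (x j / 2))) (b * exp (\<i> * complex_of_real (x j / 2)))"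
    by (simp add: apply1_st RZmat_def mult.commute)
  then show ?case using Cons
    by (simp add: mult.assoc exp_add[symmetric] algebra_simps add_divide_distrib)
qed

lemma sum_rep: "sum_list (map g (concat (map (\<lambda>j. replicate (f j) j) xs))) = sum_list (map (\<lambda>j. real (f j) * g j) xs)"
  by (induction xs) (auto simp: sum_list_replicate)

lemma nat_diff_real: "real (nat k) = real_of_int k + real (nat (- k))"
  by (cases "k \<ge> 0") auto

lemma len_rep: "length (concat (map (\<lambda>j. replicate (f j) j) xs)) = sum_list (map f xs)"
  by (induction xs) auto

theorem lemmaS4:
  fixes d s :: nat and n :: "nat \<Rightarrow> int" and c :: complex
  assumes "d \<ge> 1"
    and "(\<Sum>j<d. \<bar>n j\<bar>) \<le> int s"
    and "\<forall>x :: nat \<Rightarrow> real.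
           cmod (c * exp (\<i> * complex_of_real (\<Sum>j<d. real_of_int (n j) * x j))) \<le> 1"
  shows "\<exists>C. wf_circuit d C \<and> width C \<le> d \<and> depth C \<le> 6 * s + 3
             \<and> num_params C \<le> 4 * s + 3 * d
             \<and> (\<forall>x :: nat \<Rightarrow> real.
                  amp00 C x = c * exp (\<i> * complex_of_real (\<Sum>j<d. real_of_int (n j) * x j)))"
proof -
  have cm: "cmod c \<le> 1" using assms(3)[rule_format, of "\<lambda>_. 0"] by simp
  define negs where "negs = concat (map (\<lambda>j. replicate (2 * nat (- n j)) j) [0..<d])"
  define poss where "poss = concat (map (\<lambda>j. replicate (2 * nat (n j)) j) [0..<d])"
  define \<theta> :: real where "\<theta> = - 2 * arcsin (cmod c)"
  define \<alpha> :: real where "\<alpha> = - 2 * Arg c"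
  define gs where "gs = map (DataRZ 0) negs @ [RY 0 pi] @ map (DataRZ 0) poss @ [RY 0 \<theta>, RZ 0 \<alpha>]"
  define C where "C = Circuit 1 (map (\<lambda>g. [g]) gs)"
  have gC: "gates C = gs" by (simp add: C_def concat_map_singleton)
  have wf: "wf_circuit d C"
  proof -
    have "set negs \<subseteq> {..<d}" "set poss \<subseteq> {..<d}" unfolding negs_def poss_def by auto
    then show ?thesis using assms(1) by (auto simp: C_def gs_def)
  qed
  have sl: "sum_list (map f [0..<d]) = (\<Sum>j<d. f j)" for f :: "nat \<Rightarrow> nat"
    by (simp add: sum_set_upt_conv_sum_list_nat[symmetric] lessThan_atLeast0)
  have "int (\<Sum>j<d. 2 * nat (- n j) + 2 * nat (n j)) = (\<Sum>j<d. 2 * \<bar>n j\<bar>)"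
    by (simp add: of_nat_sum) (rule sum.cong, auto)
  also have "\<dots> \<le> 2 * int s" using assms(2) by (simp add: sum_distrib_left[symmetric])
  finally have lens: "(\<Sum>j<d. 2 * nat (- n j) + 2 * nat (n j)) \<le> 2 * s" by linarith
  have dep: "depth C = length negs + length poss + 3"
    by (simp add: C_def gs_def)
  also have "\<dots> = (\<Sum>j<d. 2 * nat (- n j) + 2 * nat (n j)) + 3"
    by (simp add: negs_def poss_def len_rep sl sum.distrib)
  finally have dep2: "depth C \<le> 6 * s + 3" using lens by linarith
  have np: "num_params C = 3"
    by (simp add: num_params_def gC gs_def comp_def)
  have amp: "amp00 C x = c * exp (\<i> * complex_of_real (\<Sum>j<d. real_of_int (n j) * x j))" for x
  proof -
    define A where "A = sum_list (map x negs)"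
    define B where "B = sum_list (map x poss)"
    have AB: "(B - A) / 2 = (\<Sum>j<d. real_of_int (n j) * x j)"
    proof -
      have "A = (\<Sum>j<d. real (2 * nat (- n j)) * x j)"
        unfolding A_def negs_def sum_rep
        by (simp add: sum_set_upt_conv_sum_list_nat[symmetric] lessThan_atLeast0)
      moreover have "B = (\<Sum>j<d. real (2 * nat (n j)) * x j)"
        unfolding B_def poss_def sum_rep
        by (simp add: sum_set_upt_conv_sum_list_nat[symmetric] lessThan_atLeast0)
      ultimately have "B - A = (\<Sum>j<d. 2 * (real_of_int (n j) * x j))"
        by (simp add: sum_subtractf[symmetric]) (rule sum.cong, simp, simp add: nat_diff_real[of "n _"] algebra_simps)
      then show ?thesis by (simp add: sum_distrib_left[symmetric])
    qed
    have ry: "RYmat pi = (\<lambda>r c. if \<not> r \<and> \<not> c then 0 else if \<not> r \<and> c then -1 else if r \<and> \<not> c then 1 else 0)"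
      by (auto simp: RYmat_def fun_eq_iff)
    have "run C x = fold (apply_gate x) gs (st 1 0)" by (simp add: run_def gC basis0_st)
    also have "\<dots> = st (exp (- \<i> * complex_of_real (\<alpha> / 2)) * (- complex_of_real (sin (\<theta> / 2)) *
          (exp (- \<i> * complex_of_real (A / 2)) * exp (\<i> * complex_of_real (B / 2)))))
       (complex_of_real (cos (\<theta> / 2)) * (exp (- \<i> * complex_of_real (A / 2)) * exp (\<i> * complex_of_real (B / 2))) * exp (\<i> * complex_of_real (\<alpha> / 2)))"
      by (simp add: gs_def data_fold A_def B_def apply1_st ry RYmat_def RZmat_def ac_simps)
    finally have "amp00 C x = exp (- \<i> * complex_of_real (\<alpha> / 2)) * (- complex_of_real (sin (\<theta> / 2)) *
          (exp (- \<i> * complex_of_real (A / 2)) * exp (\<i> * complex_of_real (B / 2))))"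
      by (simp add: amp00_def st_def)
    also have "exp (- \<i> * complex_of_real (A / 2)) * exp (\<i> * complex_of_real (B / 2))
        = exp (\<i> * complex_of_real ((B - A) / 2))"
      by (simp add: exp_add[symmetric] algebra_simps diff_divide_distrib)
    also have "- complex_of_real (sin (\<theta> / 2)) = complex_of_real (cmod c)"
      proof -
      have "sin (arcsin (cmod c)) = cmod c" by (rule sin_arcsin) (use cm norm_ge_zero[of c] in linarith)+
      then show ?thesis by (simp add: \<theta>_def)
    qed
    also have "exp (- \<i> * complex_of_real (\<alpha> / 2)) = cis (Arg c)"
      by (simp add: \<alpha>_def cis_conv_exp)
    finally have "amp00 C x = cis (Arg c) * (complex_of_real (cmod c) * exp (\<i> * complex_of_real ((B - A) / 2)))" .
    also have "\<dots> = (complex_of_real (cmod c) * cis (Arg c)) * exp (\<i> * complex_of_real ((B - A) / 2))"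
      by (simp only: ac_simps)
    also have "complex_of_real (cmod c) * cis (Arg c) = c" using rcis_cmod_Arg[of c] by (simp only: rcis_def)
    finally show ?thesis by (simp only: AB)
  qed
  show ?thesis
    by (rule exI[of _ C]) (use wf dep2 np amp assms(1) in \<open>auto simp: C_def\<close>)
qed

end
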